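(* Let $\rho\ge3$ be an integer and $(\rho_0,\rho_1,\rho_2)$ integers with $2\le\rho_0\le\rho_1\le\rho_2<\rho$ and $\rho_0+\rho_1+\rho_2=2\rho$. For every vector $\alpha=(\alpha_\ell)_{\ell=1}^{2\rho}$ over any extension field $\Phi$ of $F$, the following are equivalent: (i) $\det(M_\rho(\alpha))\neq0$; (ii) $\det(S_\rho(\alpha))\neq0$ and, for each $m\in\{0,1,2\}$, the entries $\alpha_\ell$, $\ell\in\Upsilon_m$, are pairwise distinct.
   Context: $\Upsilon_0=\{1,\dots,\rho_0\}$, $\Upsilon_1=\{\rho_0+1,\dots,\rho_0+\rho_1\}$, $\Upsilon_2=\{\rho_0+\rho_1+1,\dots,2\rho\}$. For $x=(x_\ell)_{\ell=1}^{2\rho}$ and $m\in\{0,1,2\}$, let $V_m(x)$ be the $\rho\times\rho_m$ matrix $(x_\ell^i)_{i=0,\dots,\rho-1;\ \ell\in\Upsilon_m}$. $M_\rho(x)$ is the $2\rho\times2\rho$ matrix $\begin{pmatrix}-V_0(x)&V_1(x)&0\\-V_0(x)&0&V_2(x)\end{pmatrix}$. For $m\in\{0,1,2\}$ let $\sigma_m(z)=\prod_{\ell\in\Upsilon_m}(z-x_\ell)=\sum_{j=0}^{\rho_m}\sigma_{m,j}z^{\rho_m-j}$, and let $E_\rho^{(m)}(x)$ be the $(\rho-\rho_m)\times\rho$ matrix whose $(i,c)$ entry ($i=1,\dots,\rho-\rho_m$, $c=1,\dots,\rho$) equals $\sigma_{m,c-i}$ if $0\le c-i\le\rho_m$ and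 $0$ otherwise. $S_\rho(x)$ is the $\rho\times\rho$ matrix obtained by stacking $E_\rho^{(0)}(x)$, $E_\rho^{(1)}(x)$, $E_\rho^{(2)}(x)$ (in that order) vertically. $M_\rho(\alpha)$, $S_\rho(\alpha)$ denote substitution $x\leftarrow\alpha$. *)

theory Defs
  imports "Jordan_Normal_Form.Determinant" "HOL-Computational_Algebra.Polynomial"
begin

definition Ups :: "nat \<Rightarrow> nat \<Rightarrow> nat \<Rightarrow> nat \<Rightarrow> nat set" where
  "Ups r0 r1 r m =
     (if m = 0 then {1..r0} else if m = 1 then {r0+1..r0+r1} else {r0+r1+1..2*r})"

definition rsize :: "nat \<Rightarrow> nat \<Rightarrow> nat \<Rightarrow> nat \<Rightarrow> nat" where
  "rsize r0 r1 r2 m = (if m = 0 then r0 else if m = 1 then r1 else r2)"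

text \<open>The 2r x 2r matrix M_r(x) (rows/columns 0-based in the library; column j is the
  paper's index l = j+1; row i corresponds to power i mod r).\<close>
definition M_mat :: "nat \<Rightarrow> nat \<Rightarrow> nat \<Rightarrow> (nat \<Rightarrow> 'a::comm_ring_1) \<Rightarrow> 'a mat" where
  "M_mat r r0 r1 x = mat (2*r) (2*r) (\<lambda>(i,j).
     (let l = j + 1; top = (i < r); p = (if i < r then i else i - r) in
      if l \<in> Ups r0 r1 r 0 then - (x l ^ p)
      else if l \<in> Ups r0 r1 r 1 then (if top then x l ^ p else 0)
      else (if top then 0 else x l ^ p)))"

definition sigma_poly :: "nat \<Rightarrow> nat \<Rightarrow> nat \<Rightarrow> (nat \<Rightarrow> 'a::comm_ring_1) \<Rightarrow> nat \<Rightarrow> 'a poly" where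
  "sigma_poly r0 r1 r x m = (\<Prod>l\<in>Ups r0 r1 r m. [:- x l, 1:])"

definition sigma_coeff :: "nat \<Rightarrow> nat \<Rightarrow> nat \<Rightarrow> nat \<Rightarrow> (nat \<Rightarrow> 'a::comm_ring_1) \<Rightarrow> nat \<Rightarrow> nat \<Rightarrow> 'a" where
  "sigma_coeff r0 r1 r2 r x m j = coeff (sigma_poly r0 r1 r x m) (rsize r0 r1 r2 m - j)"

text \<open>Entry (i,c) (1-based) of E^(m)_r(x).\<close>
definition E_entry :: "nat \<Rightarrow> nat \<Rightarrow> nat \<Rightarrow> nat \<Rightarrow> (nat \<Rightarrow> 'a::comm_ring_1) \<Rightarrow> nat \<Rightarrow> nat \<Rightarrow> nat \<Rightarrow> 'a" where
  "E_entry r0 r1 r2 r x m i c =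
     (if i \<le> c \<and> c - i \<le> rsize r0 r1 r2 m then sigma_coeff r0 r1 r2 r x m (c - i) else 0)"

text \<open>S_r(x): E^(0), E^(1), E^(2) stacked vertically (r x r).\<close>
definition S_mat :: "nat \<Rightarrow> nat \<Rightarrow> nat \<Rightarrow> nat \<Rightarrow> (nat \<Rightarrow> 'a::comm_ring_1) \<Rightarrow> 'a mat" where
  "S_mat r r0 r1 r2 x = mat r r (\<lambda>(a,b).
     (let i = a + 1; c = b + 1 in
      if i \<le> r - r0 then E_entry r0 r1 r2 r x 0 i c
      else if i \<le> (r - r0) + (r - r1) then E_entry r0 r1 r2 r x 1 (i - (r - r0)) c
      else E_entry r0 r1 r2 r x 2 (i - (r - r0) - (r - r1)) c))"

end

theory Submission imports Defs begin
lemma sum_split2: "(\<Sum>i<(r::nat)+r. f i) = (\<Sum>i<r. (f i::'a::comm_monoid_add)) + (\<Sum>i<r. f (r+i))"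
proof -
  have "{..<r+r} = {..<r} \<union> (\<lambda>i. r+i) ` {..<r}"
    apply (auto simp: image_iff)
    apply (drule_tac x="x - r" in bspec) by auto
  moreover have "sum f ({..<r} \<union> (\<lambda>i. r+i) ` {..<r}) = sum f {..<r} + sum f ((\<lambda>i. r+i) ` {..<r})"
    by (rule sum.union_disjoint) auto
  moreover have "sum f ((\<lambda>i. r+i) ` {..<r}) = (\<Sum>i<r. f (r+i))"
    by (subst sum.reindex) auto
  ultimately show ?thesis by simp
qed

lemma dvd_prod_roots:
  fixes x :: "nat \<Rightarrow> 'a::field"
  assumes "finite S" "inj_on x S" "\<forall>l\<in>S. poly p (x l) = 0"
  shows "(\<Prod>l\<in>S. [:- x l, 1:]) dvd p"
  using assms
proof (induction S arbitrary: p rule: finite_induct)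
  case empty then show ?case by simp
next
  case (insert a S)
  then have "(\<Prod>l\<in>S. [:- x l, 1:]) dvd p" by auto
  then obtain q where q: "p = (\<Prod>l\<in>S. [:- x l, 1:]) * q" by (auto elim: dvdE)
  have "poly (\<Prod>l\<in>S. [:- x l, 1:]) (x a) \<noteq> 0"
    using insert by (auto simp: poly_prod)
  moreover have "poly p (x a) = 0" using insert by auto
  ultimately have "poly q (x a) = 0" using q by simp
  then have "[:- x a, 1:] dvd q" by (simp add: poly_eq_0_iff_dvd)
  then obtain q' where q': "q = [:- x a, 1:] * q'" by (auto elim: dvdE)
  have "(\<Prod>l\<in>insert a S. [:- x l, 1:]) = [:- x a, 1:] * (\<Prod>l\<in>S. [:- x l, 1:])"
    using insert by simp
  then have "p = (\<Prod>l\<in>insert a S. [:- x l, 1:]) * q'" using q q' by (metis mult.assoc mult.commute)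
  then show ?case by (rule dvdI)
qed

lemma degree_linprod:
  fixes x :: "nat \<Rightarrow> 'a::field"
  assumes "finite S"
  shows "degree (\<Prod>l\<in>S. [:- x l, 1:]) = card S"
  using assms by (subst degree_prod_sum_eq) auto

definition vp :: "'a::comm_ring_1 vec \<Rightarrow> nat \<Rightarrow> nat \<Rightarrow> 'a poly" where
  "vp y s r = (\<Sum>i<r. monom (y$(s+i)) i)"

lemma poly_vp: "poly (vp y s r) t = (\<Sum>i<r. y$(s+i) * t^i)"
  by (simp add: vp_def poly_sum poly_monom)

lemma coeff_vp: "coeff (vp y s r) k = (if k<r then y$(s+k) else 0)"
  by (simp add: vp_def coeff_sum coeff_monom)

lemma Ups_simps: "Ups r0 r1 r 0 = {1..r0}" "Ups r0 r1 r (Suc 0) = {r0+1..r0+r1}"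
  "Ups r0 r1 r 2 = {r0+r1+1..2*r}"
  by (simp_all add: Ups_def)

lemma MT_mult:
  fixes x :: "nat \<Rightarrow> 'a::comm_ring_1"
  assumes y: "dim_vec y = 2*r" and j: "j < 2*r"
  shows "(transpose_mat (M_mat r r0 r1 x) *\<^sub>v y) $ j =
    (if j+1 \<in> {1..r0} then -(poly (vp y 0 r) (x (j+1)) + poly (vp y r r) (x (j+1)))
     else if j+1 \<in> {r0+1..r0+r1} then poly (vp y 0 r) (x (j+1)) else poly (vp y r r) (x (j+1)))"
proof -
  let ?M = "M_mat r r0 r1 x"
  have dims: "dim_row ?M = 2*r" "dim_col ?M = 2*r" by (simp_all add: M_mat_def)
  have "(transpose_mat ?M *\<^sub>v y) $ j = col ?M j \<bullet> y"
    using dims j by (simp add: index_mult_mat_vec row_transpose)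
  also have "\<dots> = (\<Sum>i<r+r. ?M $$ (i,j) * y$i)"
    using dims j y by (simp add: scalar_prod_def atLeast0LessThan mult_2)
  also have "\<dots> = (\<Sum>i<r. ?M $$ (i,j) * y$i) + (\<Sum>i<r. ?M $$ (r+i,j) * y$(r+i))"
    by (rule sum_split2)
  also have "\<dots> = (if j+1 \<in> {1..r0} then -(poly (vp y 0 r) (x (j+1)) + poly (vp y r r) (x (j+1)))
     else if j+1 \<in> {r0+1..r0+r1} then poly (vp y 0 r) (x (j+1)) else poly (vp y r r) (x (j+1)))"
    using j by (auto simp: M_mat_def Ups_def Let_def poly_vp sum_negf ac_simps)
  finally show ?thesis .
qed

lemma detM_zero_iff:
  fixes x :: "nat \<Rightarrow> 'a::field"
  assumes r: "r \<ge> 1" and rr: "r0 + r1 \<le> 2*r"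
  shows "det (M_mat r r0 r1 x) = 0 \<longleftrightarrow> (\<exists>U V. (U \<noteq> 0 \<or> V \<noteq> 0) \<and> degree U < r \<and> degree V < r \<and>
     (\<forall>l\<in>{1..r0}. poly (U+V) (x l) = 0) \<and> (\<forall>l\<in>{r0+1..r0+r1}. poly U (x l) = 0) \<and>
     (\<forall>l\<in>{r0+r1+1..2*r}. poly V (x l) = 0))" (is "_ \<longleftrightarrow> ?R")
proof -
  let ?M = "M_mat r r0 r1 x"
  have carr: "?M \<in> carrier_mat (2*r) (2*r)" by (simp add: M_mat_def)
  then have carrT: "transpose_mat ?M \<in> carrier_mat (2*r) (2*r)" by simp
  have "det ?M = det (transpose_mat ?M)" using det_transpose[OF carr] by simp
  then have eq: "det ?M = 0 \<longleftrightarrow> (\<exists>y. y \<in> carrier_vec (2*r) \<and> y \<noteq> 0\<^sub>v (2*r) \<and> transpose_mat ?M *\<^sub>v y = 0\<^sub>v (2*r))"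
    using det_0_iff_vec_prod_zero_field[OF carrT] by simp
  show ?thesis
  proof
    assume "det ?M = 0"
    then obtain y where y: "y \<in> carrier_vec (2*r)" "y \<noteq> 0\<^sub>v (2*r)" "transpose_mat ?M *\<^sub>v y = 0\<^sub>v (2*r)"
      using eq by blast
    have dy: "dim_vec y = 2*r" using y by simp
    define U where "U = vp y 0 r"
    define V where "V = vp y r r"
    have zero: "(transpose_mat ?M *\<^sub>v y) $ j = 0" if "j < 2*r" for j
      using y that by simp
    obtain i where i: "i < 2*r" "y $ i \<noteq> 0"
      using y by (metis dy eq_vecI index_zero_vec(1) index_zero_vec(2))
    have nz: "U \<noteq> 0 \<or> V \<noteq> 0"
    proof (cases "i < r")
      case True
      then have "coeff U i \<noteq> 0" using i by (simp add: U_def coeff_vp)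
      then show ?thesis by auto
    next
      case False
      then have "coeff V (i-r) \<noteq> 0" using i by (simp add: V_def coeff_vp)
      then show ?thesis by auto
    qed
    have "degree U \<le> r - 1" by (rule degree_le) (auto simp: U_def coeff_vp)
    then have dU: "degree U < r" using r by simp
    have "degree V \<le> r - 1" by (rule degree_le) (auto simp: V_def coeff_vp)
    then have dV: "degree V < r" using r by simp
    have c0: "\<forall>l\<in>{1..r0}. poly (U+V) (x l) = 0"
    proof
      fix l assume l: "l \<in> {1..r0}"
      then have "l - 1 < 2*r" using rr by auto
      from zero[OF this] MT_mult[OF dy this] l show "poly (U+V) (x l) = 0"
        by (simp add: U_def V_def add_eq_0_iff)
    qed
    have c1: "\<forall>l\<in>{r0+1..r0+r1}. poly U (x l) = 0"
    proof
      fix l assume l: "l \<in> {r0+1..r0+r1}"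
      then have "l - 1 < 2*r" using rr by auto
      from zero[OF this] MT_mult[OF dy this] l show "poly U (x l) = 0"
        by (simp add: U_def V_def)
    qed
    have c2: "\<forall>l\<in>{r0+r1+1..2*r}. poly V (x l) = 0"
    proof
      fix l assume l: "l \<in> {r0+r1+1..2*r}"
      then have "l - 1 < 2*r" using rr by auto
      from zero[OF this] MT_mult[OF dy this] l show "poly V (x l) = 0"
        by (simp add: U_def V_def)
    qed
    show ?R using nz dU dV c0 c1 c2 by blast
  next
    assume ?R
    then obtain U V where nz: "U \<noteq> 0 \<or> V \<noteq> 0" and dU: "degree U < r" and dV: "degree V < r"
      and c0: "\<forall>l\<in>{1..r0}. poly (U+V) (x l) = 0" and c1: "\<forall>l\<in>{r0+1..r0+r1}. poly U (x l) = 0"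
      and c2: "\<forall>l\<in>{r0+r1+1..2*r}. poly V (x l) = 0" by blast
    define y where "y = vec (2*r) (\<lambda>i. if i < r then coeff U i else coeff V (i-r))"
    have dy: "dim_vec y = 2*r" by (simp add: y_def)
    have U: "vp y 0 r = U"
    proof (rule poly_eqI)
      fix k show "coeff (vp y 0 r) k = coeff U k"
        using dU by (auto simp: coeff_vp y_def coeff_eq_0)
    qed
    have V: "vp y r r = V"
    proof (rule poly_eqI)
      fix k show "coeff (vp y r r) k = coeff V k"
        using dV by (auto simp: coeff_vp y_def coeff_eq_0)
    qed
    have "y \<noteq> 0\<^sub>v (2*r)"
    proof
      assume y0: "y = 0\<^sub>v (2*r)"
      have "U = 0" using U y0 by (auto simp: vp_def)
      moreover have "V = 0" using V y0 by (auto simp: vp_def)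
      ultimately show False using nz by simp
    qed
    moreover have "transpose_mat ?M *\<^sub>v y = 0\<^sub>v (2*r)"
    proof (rule eq_vecI)
      show "dim_vec (transpose_mat ?M *\<^sub>v y) = dim_vec (0\<^sub>v (2*r))" using carr by simp
      fix j assume "j < dim_vec (0\<^sub>v (2*r))"
      then have j: "j < 2*r" by simp
      have "(transpose_mat ?M *\<^sub>v y) $ j = 0"
      proof (cases "j+1 \<in> {1..r0}")
        case True
        then have "poly (U+V) (x (j+1)) = 0" using c0 by blast
        then show ?thesis unfolding MT_mult[OF dy j] U V using True by simp
      next
        case F1: False
        show ?thesis
        proof (cases "j+1 \<in> {r0+1..r0+r1}")
          case True
          then have "poly U (x (j+1)) = 0" using c1 by blast
          then show ?thesis unfolding MT_mult[OF dy j] U V using True F1 by simp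
        next
          case False
          then have "j+1 \<in> {r0+r1+1..2*r}" using F1 j by auto
          then have "poly V (x (j+1)) = 0" using c2 by blast
          then show ?thesis unfolding MT_mult[OF dy j] U V using False F1 by simp
        qed
      qed
      then show "(transpose_mat ?M *\<^sub>v y) $ j = 0\<^sub>v (2*r) $ j" using j by simp
    qed
    moreover have "y \<in> carrier_vec (2*r)" using dy by (rule carrier_vecI)
    ultimately show "det ?M = 0" using eq by blast
  qed
qed

definition blockpoly :: "'a::comm_ring_1 vec \<Rightarrow> nat \<Rightarrow> nat \<Rightarrow> 'a poly" where
  "blockpoly w lo hi = (\<Sum>a\<in>{lo..<hi}. monom (w$a) (hi - 1 - a))"

lemma coeff_blockpoly:
  assumes "lo \<le> hi"
  shows "coeff (blockpoly w lo hi) j = (if j < hi - lo then w$(hi-1-j) else 0)"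
proof -
  have "coeff (blockpoly w lo hi) j = (\<Sum>a\<in>{lo..<hi}. if hi - 1 - a = j then w$a else 0)"
    by (simp add: blockpoly_def coeff_sum coeff_monom)
  also have "\<dots> = (\<Sum>a\<in>{lo..<hi}. if j < hi - lo then (if a = hi - 1 - j then w$a else 0) else 0)"
    by (rule sum.cong) auto
  also have "\<dots> = (if j < hi - lo then w$(hi-1-j) else 0)"
    using assms by (auto simp: sum.delta)
  finally show ?thesis .
qed

lemma E_coeff:
  fixes p :: "'a::comm_ring_1 poly"
  assumes "degree p = d" "1 \<le> i" "K + i + d = R" "1 \<le> c" "c \<le> R"
  shows "(if i \<le> c \<and> c - i \<le> d then coeff p (d - (c-i)) else 0) = coeff (monom 1 K * p) (R - c)"
proof (cases "i \<le> c \<and> c - i \<le> d")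
  case True
  then show ?thesis using assms by (auto simp: coeff_monom_mult) (metis add_diff_cancel_right' diff_diff_left add.commute diff_diff_eq2 le_add_diff_inverse2 ; fail)?
next
  case False
  show ?thesis
  proof (cases "c < i")
    case True
    then have "degree p < R - c - K" using assms by linarith
    then show ?thesis using False assms True by (auto simp: coeff_monom_mult coeff_eq_0)
  next
    case F2: False
    then show ?thesis using False assms by (auto simp: coeff_monom_mult)
  qed
qed

lemma S_entry:
  fixes x :: "nat \<Rightarrow> 'a::comm_ring_1"
  assumes sum: "r0 + r1 + r2 = 2*r" and lt: "r0 < r" "r1 < r" "r2 < r"
    and deg: "\<And>m. degree (sigma_poly r0 r1 r x m) = rsize r0 r1 r2 m"
    and a: "a < r" and b: "b < r"
  shows "S_mat r r0 r1 r2 x $$ (a,b) =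
    (if a < r - r0 then coeff (monom 1 (r-r0-1-a) * sigma_poly r0 r1 r x 0) (r-1-b)
     else if a < r2 then coeff (monom 1 (r2-1-a) * sigma_poly r0 r1 r x 1) (r-1-b)
     else coeff (monom 1 (r-1-a) * sigma_poly r0 r1 r x 2) (r-1-b))"
proof -
  have e: "(r - r0) + (r - r1) = r2" using sum lt by linarith
  have Sab: "S_mat r r0 r1 r2 x $$ (a,b) =
      (if a+1 \<le> r - r0 then E_entry r0 r1 r2 r x 0 (a+1) (b+1)
      else if a+1 \<le> r2 then E_entry r0 r1 r2 r x 1 (a+1 - (r - r0)) (b+1)
      else E_entry r0 r1 r2 r x 2 (a+1 - (r - r0) - (r - r1)) (b+1))"
    using a b e by (simp add: S_mat_def Let_def)
  have d0: "degree (sigma_poly r0 r1 r x 0) = r0" using deg[of 0] by (simp add: rsize_def)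
  have d1: "degree (sigma_poly r0 r1 r x 1) = r1" using deg[of 1] by (simp add: rsize_def)
  have d2: "degree (sigma_poly r0 r1 r x 2) = r2" using deg[of 2] by (simp add: rsize_def)
  show ?thesis
  proof (cases "a < r - r0")
    case True
    have "E_entry r0 r1 r2 r x 0 (a+1) (b+1) = coeff (monom 1 (r-r0-1-a) * sigma_poly r0 r1 r x 0) (r - (b+1))"
      unfolding E_entry_def sigma_coeff_def using True b
      by (subst E_coeff[OF d0, of "a+1" "r-r0-1-a" r "b+1", symmetric]) (auto simp: rsize_def)
    then show ?thesis using Sab True by simp
  next
    case F0: False
    show ?thesis
    proof (cases "a < r2")
      case True
      have "E_entry r0 r1 r2 r x 1 (a+1-(r-r0)) (b+1) = coeff (monom 1 (r2-1-a) * sigma_poly r0 r1 r x 1) (r - (b+1))"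
        unfolding E_entry_def sigma_coeff_def using True F0 b e
        by (subst E_coeff[OF d1, of "a+1-(r-r0)" "r2-1-a" r "b+1", symmetric]) (auto simp: rsize_def)
      then show ?thesis using Sab True F0 by simp
    next
      case False
      have "E_entry r0 r1 r2 r x 2 (a+1-(r-r0)-(r-r1)) (b+1) = coeff (monom 1 (r-1-a) * sigma_poly r0 r1 r x 2) (r - (b+1))"
        unfolding E_entry_def sigma_coeff_def using False F0 b e a
        by (subst E_coeff[OF d2, of "a+1-(r-r0)-(r-r1)" "r-1-a" r "b+1", symmetric]) (auto simp: rsize_def)
      then show ?thesis using Sab False F0 by simp
    qed
  qed
qed

lemma coeff_mult_blockpoly:
  "coeff (p * blockpoly w lo hi) n = (\<Sum>a\<in>{lo..<hi}. coeff (monom 1 (hi-1-a) * p) n * w$a)"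
proof -
  have "p * blockpoly w lo hi = (\<Sum>a\<in>{lo..<hi}. monom (w$a) (hi - 1 - a) * p)"
    by (simp add: blockpoly_def sum_distrib_left mult.commute)
  then have "coeff (p * blockpoly w lo hi) n = (\<Sum>a\<in>{lo..<hi}. coeff (monom (w$a) (hi - 1 - a) * p) n)"
    by (simp add: coeff_sum)
  also have "\<dots> = (\<Sum>a\<in>{lo..<hi}. coeff (monom 1 (hi-1-a) * p) n * w$a)"
    by (rule sum.cong) (simp_all add: coeff_monom_mult)
  finally show ?thesis .
qed

definition PW :: "nat \<Rightarrow> nat \<Rightarrow> nat \<Rightarrow> nat \<Rightarrow> (nat \<Rightarrow> 'a::comm_ring_1) \<Rightarrow> 'a vec \<Rightarrow> 'a poly" where
  "PW r r0 r1 r2 x w = sigma_poly r0 r1 r x 0 * blockpoly w 0 (r-r0)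
     + sigma_poly r0 r1 r x 1 * blockpoly w (r-r0) r2 + sigma_poly r0 r1 r x 2 * blockpoly w r2 r"

lemma ST_mult:
  fixes x :: "nat \<Rightarrow> 'a::comm_ring_1"
  assumes sum: "r0 + r1 + r2 = 2*r" and lt: "r0 < r" "r1 < r" "r2 < r"
    and deg: "\<And>m. degree (sigma_poly r0 r1 r x m) = rsize r0 r1 r2 m"
    and w: "dim_vec w = r" and b: "b < r"
  shows "(transpose_mat (S_mat r r0 r1 r2 x) *\<^sub>v w) $ b = coeff (PW r r0 r1 r2 x w) (r-1-b)"
proof -
  let ?S = "S_mat r r0 r1 r2 x"
  have e: "(r - r0) + (r - r1) = r2" using sum lt by linarith
  have dims: "dim_row ?S = r" "dim_col ?S = r" by (simp_all add: S_mat_def)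
  have "(transpose_mat ?S *\<^sub>v w) $ b = col ?S b \<bullet> w"
    using dims b by (simp add: index_mult_mat_vec row_transpose)
  also have "\<dots> = (\<Sum>a\<in>{0..<r}. ?S $$ (a,b) * w$a)"
    using dims b w by (simp add: scalar_prod_def)
  also have "\<dots> = (\<Sum>a\<in>{0..<r-r0}. ?S $$ (a,b) * w$a) + (\<Sum>a\<in>{r-r0..<r2}. ?S $$ (a,b) * w$a)
      + (\<Sum>a\<in>{r2..<r}. ?S $$ (a,b) * w$a)"
    using e lt by (simp add: sum.atLeastLessThan_concat)
  also have "(\<Sum>a\<in>{0..<r-r0}. ?S $$ (a,b) * w$a) = coeff (sigma_poly r0 r1 r x 0 * blockpoly w 0 (r-r0)) (r-1-b)"
    unfolding coeff_mult_blockpoly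
    by (rule sum.cong) (use b in \<open>auto simp: S_entry[OF sum lt deg _ b]\<close>)
  also have "(\<Sum>a\<in>{r-r0..<r2}. ?S $$ (a,b) * w$a) = coeff (sigma_poly r0 r1 r x 1 * blockpoly w (r-r0) r2) (r-1-b)"
    unfolding coeff_mult_blockpoly
    by (rule sum.cong) (use b lt in \<open>auto simp: S_entry[OF sum lt deg _ b]\<close>)
  also have "(\<Sum>a\<in>{r2..<r}. ?S $$ (a,b) * w$a) = coeff (sigma_poly r0 r1 r x 2 * blockpoly w r2 r) (r-1-b)"
    unfolding coeff_mult_blockpoly
    by (rule sum.cong) (use b lt e in \<open>auto simp: S_entry[OF sum lt deg _ b]\<close>)
  finally show ?thesis by (simp add: PW_def)
qed

lemma PW_high:
  fixes x :: "nat \<Rightarrow> 'a::comm_ring_1"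
  assumes sum: "r0 + r1 + r2 = 2*r" and lt: "r0 < r" "r1 < r" "r2 < r"
    and deg: "\<And>m. degree (sigma_poly r0 r1 r x m) = rsize r0 r1 r2 m"
    and n: "n \<ge> r"
  shows "coeff (PW r r0 r1 r2 x w) n = 0"
proof -
  have e: "(r - r0) + (r - r1) = r2" using sum lt by linarith
  have d0: "degree (sigma_poly r0 r1 r x 0) = r0" using deg[of 0] by (simp add: rsize_def)
  have d1: "degree (sigma_poly r0 r1 r x 1) = r1" using deg[of 1] by (simp add: rsize_def)
  have d2: "degree (sigma_poly r0 r1 r x 2) = r2" using deg[of 2] by (simp add: rsize_def)
  have z: "(\<Sum>a\<in>{lo..<hi}. coeff (monom 1 (hi-1-a) * p) n * w$a) = 0"
    if "degree p = d" "hi - lo + d \<le> r" "lo < hi"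
    for lo hi d and p :: "'a poly"
  proof (rule sum.neutral, rule ballI)
    fix a assume a: "a \<in> {lo..<hi}"
    have "coeff (monom 1 (hi - 1 - a) * p) n = 0"
      using that n a by (auto simp: coeff_monom_mult intro!: coeff_eq_0)
    then show "coeff (monom 1 (hi-1-a) * p) n * w$a = 0" by simp
  qed
  have z0: "(\<Sum>a\<in>{0..<r-r0}. coeff (monom 1 (r-r0-1-a) * sigma_poly r0 r1 r x 0) n * w$a) = 0"
    by (rule z[OF d0]) (use lt in auto)
  have z1: "(\<Sum>a\<in>{r-r0..<r2}. coeff (monom 1 (r2-1-a) * sigma_poly r0 r1 r x 1) n * w$a) = 0"
    by (rule z[OF d1]) (use lt e in auto)
  have z2: "(\<Sum>a\<in>{r2..<r}. coeff (monom 1 (r-1-a) * sigma_poly r0 r1 r x 2) n * w$a) = 0"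
    by (rule z[OF d2]) (use lt e in auto)
  show ?thesis
    unfolding PW_def coeff_add coeff_mult_blockpoly z0 z1 z2 by simp
qed

lemma blockpoly_nz:
  assumes "lo \<le> a" "a < hi" "w$a \<noteq> 0"
  shows "blockpoly w lo hi \<noteq> 0"
proof
  assume "blockpoly w lo hi = 0"
  then have "coeff (blockpoly w lo hi) (hi-1-a) = 0" by simp
  moreover have "hi-1-a < hi-lo" "hi - 1 - (hi-1-a) = a" using assms by auto
  ultimately show False using assms by (simp add: coeff_blockpoly)
qed

lemma degree_blockpoly:
  assumes "lo < hi"
  shows "degree (blockpoly w lo hi) < hi - lo"
proof -
  have "degree (blockpoly w lo hi) \<le> hi - lo - 1"
    by (rule degree_le) (use assms in \<open>auto simp: coeff_blockpoly\<close>)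
  then show ?thesis using assms by linarith
qed

lemma detS_zero_iff:
  fixes x :: "nat \<Rightarrow> 'a::field"
  assumes sum: "r0 + r1 + r2 = 2*r" and lt: "r0 < r" "r1 < r" "r2 < r"
    and deg: "\<And>m. degree (sigma_poly r0 r1 r x m) = rsize r0 r1 r2 m"
  shows "det (S_mat r r0 r1 r2 x) = 0 \<longleftrightarrow> (\<exists>C A B. (C \<noteq> 0 \<or> A \<noteq> 0 \<or> B \<noteq> 0) \<and>
     degree C < r - r0 \<and> degree A < r - r1 \<and> degree B < r - r2 \<and>
     sigma_poly r0 r1 r x 0 * C + sigma_poly r0 r1 r x 1 * A + sigma_poly r0 r1 r x 2 * B = 0)"
    (is "_ \<longleftrightarrow> ?R")
proof -
  let ?S = "S_mat r r0 r1 r2 x"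
  have e: "(r - r0) + (r - r1) = r2" using sum lt by linarith
  have carr: "?S \<in> carrier_mat r r" by (simp add: S_mat_def)
  then have carrT: "transpose_mat ?S \<in> carrier_mat r r" by simp
  have "det ?S = det (transpose_mat ?S)" using det_transpose[OF carr] by simp
  then have eq: "det ?S = 0 \<longleftrightarrow> (\<exists>w. w \<in> carrier_vec r \<and> w \<noteq> 0\<^sub>v r \<and> transpose_mat ?S *\<^sub>v w = 0\<^sub>v r)"
    using det_0_iff_vec_prod_zero_field[OF carrT] by simp
  have key: "transpose_mat ?S *\<^sub>v w = 0\<^sub>v r \<longleftrightarrow> PW r r0 r1 r2 x w = 0" if w: "dim_vec w = r" for w
  proof
    assume z: "transpose_mat ?S *\<^sub>v w = 0\<^sub>v r"
    show "PW r r0 r1 r2 x w = 0"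
    proof (rule poly_eqI)
      fix n
      show "coeff (PW r r0 r1 r2 x w) n = coeff 0 n"
      proof (cases "n < r")
        case True
        then have "r - 1 - n < r" by simp
        from ST_mult[OF sum lt deg w this] z this True show ?thesis by simp
      next
        case False
        then show ?thesis using PW_high[OF sum lt deg] by simp
      qed
    qed
  next
    assume z: "PW r r0 r1 r2 x w = 0"
    show "transpose_mat ?S *\<^sub>v w = 0\<^sub>v r"
    proof (rule eq_vecI)
      show "dim_vec (transpose_mat ?S *\<^sub>v w) = dim_vec (0\<^sub>v r)" using carr by simp
      fix b assume "b < dim_vec (0\<^sub>v r)"
      then have b: "b < r" by simp
      show "(transpose_mat ?S *\<^sub>v w) $ b = 0\<^sub>v r $ b"
        using ST_mult[OF sum lt deg w b] z b by simp
    qed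
  qed
  show ?thesis
  proof
    assume "det ?S = 0"
    then obtain w where w: "w \<in> carrier_vec r" "w \<noteq> 0\<^sub>v r" "transpose_mat ?S *\<^sub>v w = 0\<^sub>v r"
      using eq by blast
    have dw: "dim_vec w = r" using w by simp
    have P: "PW r r0 r1 r2 x w = 0" using key[OF dw] w by simp
    define C where "C = blockpoly w 0 (r-r0)"
    define A where "A = blockpoly w (r-r0) r2"
    define B where "B = blockpoly w r2 r"
    obtain a where a: "a < r" "w $ a \<noteq> 0"
      using w dw by (metis eq_vecI index_zero_vec(1) index_zero_vec(2))
    have nz: "C \<noteq> 0 \<or> A \<noteq> 0 \<or> B \<noteq> 0"
    proof (cases "a < r - r0")
      case True
      have "C \<noteq> 0" unfolding C_def by (rule blockpoly_nz) (use a True in auto)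
      then show ?thesis by simp
    next
      case F: False
      show ?thesis
      proof (cases "a < r2")
        case True
        have "A \<noteq> 0" unfolding A_def by (rule blockpoly_nz) (use a F True in auto)
        then show ?thesis by simp
      next
        case False
        have "B \<noteq> 0" unfolding B_def by (rule blockpoly_nz) (use a F False in auto)
        then show ?thesis by simp
      qed
    qed
    have dC: "degree C < r - r0" using degree_blockpoly[of 0 "r-r0" w] lt by (simp add: C_def)
    have hA: "r - r0 < r2" "r2 - (r - r0) = r - r1" using e lt by linarith+
    have "degree A < r2 - (r - r0)" unfolding A_def by (rule degree_blockpoly[OF hA(1)])
    then have dA: "degree A < r - r1" unfolding hA(2) .
    have dB: "degree B < r - r2" using degree_blockpoly[of r2 r w] lt by (simp add: B_def)
    show ?R using nz dC dA dB P unfolding PW_def C_def A_def B_def by blast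
  next
    assume ?R
    then obtain C A B where nz: "C \<noteq> 0 \<or> A \<noteq> 0 \<or> B \<noteq> 0" and dC: "degree C < r - r0"
      and dA: "degree A < r - r1" and dB: "degree B < r - r2"
      and P: "sigma_poly r0 r1 r x 0 * C + sigma_poly r0 r1 r x 1 * A + sigma_poly r0 r1 r x 2 * B = 0"
      by blast
    define w where "w = vec r (\<lambda>a. if a < r - r0 then coeff C (r-r0-1-a)
        else if a < r2 then coeff A (r2-1-a) else coeff B (r-1-a))"
    have dw: "dim_vec w = r" by (simp add: w_def)
    have C: "blockpoly w 0 (r-r0) = C"
    proof (rule poly_eqI)
      fix j show "coeff (blockpoly w 0 (r-r0)) j = coeff C j"
        using dC lt by (auto simp: coeff_blockpoly w_def coeff_eq_0)
    qed
    have A: "blockpoly w (r-r0) r2 = A"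
    proof (rule poly_eqI)
      fix j show "coeff (blockpoly w (r-r0) r2) j = coeff A j"
        using dA lt e by (auto simp: coeff_blockpoly w_def coeff_eq_0)
    qed
    have B: "blockpoly w r2 r = B"
    proof (rule poly_eqI)
      fix j show "coeff (blockpoly w r2 r) j = coeff B j"
        using dB lt e by (auto simp: coeff_blockpoly w_def coeff_eq_0)
    qed
    have "w \<noteq> 0\<^sub>v r"
    proof
      assume w0: "w = 0\<^sub>v r"
      have bz: "blockpoly (0\<^sub>v r) lo hi = 0" if "hi \<le> r" for lo hi
        using that by (simp add: blockpoly_def)
      have "C = 0" using C w0 bz[of "r-r0" 0] by (metis diff_le_self)
      moreover have "A = 0" using A w0 bz[of r2 "r-r0"] lt by (metis less_imp_le)
      moreover have "B = 0" using B w0 bz[of r r2] by (metis order_refl)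
      ultimately have "C = 0" "A = 0" "B = 0" by auto
      then show False using nz by simp
    qed
    moreover have "PW r r0 r1 r2 x w = 0" using P C A B by (simp add: PW_def)
    then have "transpose_mat ?S *\<^sub>v w = 0\<^sub>v r" using key[OF dw] by simp
    moreover have "w \<in> carrier_vec r" using dw by (rule carrier_vecI)
    ultimately show "det ?S = 0" using eq by blast
  qed
qed

lemma sigma_nz: "finite (Ups r0 r1 r m) \<Longrightarrow> sigma_poly r0 r1 r (x::nat \<Rightarrow> 'a::field) m \<noteq> 0"
  by (simp add: sigma_poly_def)

lemma sigma_root: "l \<in> Ups r0 r1 r m \<Longrightarrow> finite (Ups r0 r1 r m) \<Longrightarrow>
    poly (sigma_poly r0 r1 r (x::nat \<Rightarrow> 'a::field) m) (x l) = 0"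
  by (auto simp: sigma_poly_def poly_prod)

lemma deg_quot:
  fixes p s q :: "'a::field poly"
  assumes "p = s * q" "degree s = d" "degree p < r" "d < r" "s \<noteq> 0"
  shows "degree q < r - d"
proof (cases "q = 0")
  case True then show ?thesis using assms by simp
next
  case False
  then have "degree p = d + degree q" using assms by (simp add: degree_mult_eq)
  then show ?thesis using assms by linarith
qed

lemma deg_prod_lt:
  fixes s q :: "'a::field poly"
  assumes "degree s = d" "degree q < r - d"
  shows "degree (s * q) < r"
proof -
  have "degree (s*q) \<le> degree s + degree q" by (rule degree_mult_le)
  then show ?thesis using assms by linarith
qed

lemma cols_equal_det0:
  fixes x :: "nat \<Rightarrow> 'a::field"
  assumes rr: "r0 + r1 \<le> 2*r" and m: "l \<in> Ups r0 r1 r m" "l' \<in> Ups r0 r1 r m" "l \<noteq> l'" "x l = x l'"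
  shows "det (M_mat r r0 r1 x) = 0"
proof -
  have sub: "Ups r0 r1 r m \<subseteq> {1..2*r}" using rr by (auto simp: Ups_def)
  have lin: "l \<in> {1..2*r}" "l' \<in> {1..2*r}" using m sub by blast+
  have l: "l - 1 < 2*r" "l' - 1 < 2*r" "l - 1 \<noteq> l' - 1" "l - 1 + 1 = l" "l' - 1 + 1 = l'"
    using lin m(3) by auto
  have carr: "M_mat r r0 r1 x \<in> carrier_mat (2*r) (2*r)" by (simp add: M_mat_def)
  have mem: "l \<in> Ups r0 r1 r k \<longleftrightarrow> l' \<in> Ups r0 r1 r k" for k
    using m by (auto simp: Ups_def split: if_splits)
  show ?thesis
  proof (rule det_identical_columns[OF carr l(3) l(1) l(2)])
    show "col (M_mat r r0 r1 x) (l - 1) = col (M_mat r r0 r1 x) (l' - 1)"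
    proof (rule eq_vecI)
      show "dim_vec (col (M_mat r r0 r1 x) (l - 1)) = dim_vec (col (M_mat r r0 r1 x) (l' - 1))"
        using carr by simp
      fix i assume "i < dim_vec (col (M_mat r r0 r1 x) (l' - 1))"
      then have i: "i < 2*r" using carr by simp
      have "M_mat r r0 r1 x $$ (i, l-1) = M_mat r r0 r1 x $$ (i, l'-1)"
        using i l unfolding M_mat_def by (simp add: Let_def mem[of 0] mem[of 1] mem[of "Suc 0"] m(4))
      then show "col (M_mat r r0 r1 x) (l - 1) $ i = col (M_mat r r0 r1 x) (l' - 1) $ i"
        using i l carr by simp
    qed
  qed
qed

theorem mainTheorem18:
  fixes x :: "nat \<Rightarrow> 'a::field" and r r0 r1 r2 :: nat
  assumes "r \<ge> 3" and "2 \<le> r0" and "r0 \<le> r1" and "r1 \<le> r2" and "r2 < r"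
    and "r0 + r1 + r2 = 2 * r"
  shows "det (M_mat r r0 r1 x) \<noteq> 0 \<longleftrightarrow>
           (det (S_mat r r0 r1 r2 x) \<noteq> 0 \<and> (\<forall>m\<in>{0,1,2::nat}. inj_on x (Ups r0 r1 r m)))"
proof -
  note a = assms
  have sum: "r0 + r1 + r2 = 2*r" using a by simp
  have lt: "r0 < r" "r1 < r" "r2 < r" using a by linarith+
  have r1': "r \<ge> 1" using a by simp
  have rr: "r0 + r1 \<le> 2*r" using a by linarith
  have U0: "Ups r0 r1 r 0 = {1..r0}" and U1: "Ups r0 r1 r 1 = {r0+1..r0+r1}"
    and U2: "Ups r0 r1 r 2 = {r0+r1+1..2*r}" by (simp_all add: Ups_def)
  have fin: "finite (Ups r0 r1 r m)" for m by (simp add: Ups_def)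
  have deg: "degree (sigma_poly r0 r1 r x m) = rsize r0 r1 r2 m" for m
    using sum by (auto simp add: sigma_poly_def degree_linprod Ups_def rsize_def)
  have d0: "degree (sigma_poly r0 r1 r x 0) = r0" using deg[of 0] by (simp add: rsize_def)
  have d1: "degree (sigma_poly r0 r1 r x 1) = r1" using deg[of 1] by (simp add: rsize_def)
  have d2: "degree (sigma_poly r0 r1 r x 2) = r2" using deg[of 2] by (simp add: rsize_def)
  have nz: "sigma_poly r0 r1 r x m \<noteq> 0" for m using sigma_nz[OF fin] .
  have root: "poly (sigma_poly r0 r1 r x m) (x l) = 0" if "l \<in> Ups r0 r1 r m" for l m
    using sigma_root[OF that fin] .
  note MZ = detM_zero_iff[OF r1' rr, of x]
  note SZ = detS_zero_iff[OF sum lt deg]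
  let ?s0 = "sigma_poly r0 r1 r x 0" and ?s1 = "sigma_poly r0 r1 r x 1" and ?s2 = "sigma_poly r0 r1 r x 2"
  show ?thesis
  proof
    assume dM: "det (M_mat r r0 r1 x) \<noteq> 0"
    have inj: "\<forall>m\<in>{0,1,2::nat}. inj_on x (Ups r0 r1 r m)"
    proof (intro ballI inj_onI, rule ccontr)
      fix m l l' assume "l \<in> Ups r0 r1 r m" "l' \<in> Ups r0 r1 r m" "x l = x l'" "l \<noteq> l'"
      then have "det (M_mat r r0 r1 x) = 0" using cols_equal_det0[OF rr] by blast
      then show False using dM by simp
    qed
    have "det (S_mat r r0 r1 r2 x) \<noteq> 0"
    proof
      assume "det (S_mat r r0 r1 r2 x) = 0"
      then obtain C A B where nzCAB: "C \<noteq> 0 \<or> A \<noteq> 0 \<or> B \<noteq> 0" and dC: "degree C < r - r0"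
        and dA: "degree A < r - r1" and dB: "degree B < r - r2"
        and P: "?s0 * C + ?s1 * A + ?s2 * B = 0" using SZ by blast
      define U where "U = ?s1 * A"
      define V where "V = ?s2 * B"
      have "?s0 * C + (U + V) = 0" using P unfolding U_def V_def by (simp only: add.assoc)
      then have UV: "U + V = - (?s0 * C)" by (metis add.commute eq_neg_iff_add_eq_0)
      have "U \<noteq> 0 \<or> V \<noteq> 0"
      proof (rule ccontr)
        assume "\<not> (U \<noteq> 0 \<or> V \<noteq> 0)"
        then have "A = 0" "B = 0" using nz unfolding U_def V_def by auto
        moreover then have "C = 0" using P nz by simp
        ultimately show False using nzCAB by simp
      qed
      moreover have "degree U < r" unfolding U_def by (rule deg_prod_lt[OF d1 dA])
      moreover have "degree V < r" unfolding V_def by (rule deg_prod_lt[OF d2 dB])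
      moreover have "\<forall>l\<in>{1..r0}. poly (U+V) (x l) = 0"
        using root[of _ 0] U0 UV by simp
      moreover have "\<forall>l\<in>{r0+1..r0+r1}. poly U (x l) = 0"
        using root[of _ 1] U1 U_def by simp
      moreover have "\<forall>l\<in>{r0+r1+1..2*r}. poly V (x l) = 0"
        using root[of _ 2] U2 V_def by simp
      ultimately have "det (M_mat r r0 r1 x) = 0" using MZ by blast
      then show False using dM by simp
    qed
    then show "det (S_mat r r0 r1 r2 x) \<noteq> 0 \<and> (\<forall>m\<in>{0,1,2::nat}. inj_on x (Ups r0 r1 r m))"
      using inj by simp
  next
    assume h: "det (S_mat r r0 r1 r2 x) \<noteq> 0 \<and> (\<forall>m\<in>{0,1,2::nat}. inj_on x (Ups r0 r1 r m))"
    then have inj0: "inj_on x (Ups r0 r1 r 0)" and inj1: "inj_on x (Ups r0 r1 r 1)"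
      and inj2: "inj_on x (Ups r0 r1 r 2)" by auto
    show "det (M_mat r r0 r1 x) \<noteq> 0"
    proof
      assume "det (M_mat r r0 r1 x) = 0"
      then obtain U V where nzUV: "U \<noteq> 0 \<or> V \<noteq> 0" and dU: "degree U < r" and dV: "degree V < r"
        and c0: "\<forall>l\<in>{1..r0}. poly (U+V) (x l) = 0" and c1: "\<forall>l\<in>{r0+1..r0+r1}. poly U (x l) = 0"
        and c2: "\<forall>l\<in>{r0+r1+1..2*r}. poly V (x l) = 0" using MZ by blast
      have "?s1 dvd U" unfolding sigma_poly_def
        by (rule dvd_prod_roots[OF fin inj1]) (use c1 U1 in simp)
      then obtain A where A: "U = ?s1 * A" by (auto elim: dvdE)
      have "?s2 dvd V" unfolding sigma_poly_def
        by (rule dvd_prod_roots[OF fin inj2]) (use c2 U2 in simp)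
      then obtain B where B: "V = ?s2 * B" by (auto elim: dvdE)
      have "?s0 dvd U + V" unfolding sigma_poly_def
        by (rule dvd_prod_roots[OF fin inj0]) (use c0 U0 in simp)
      then obtain C' where C': "U + V = ?s0 * C'" by (auto elim: dvdE)
      have dA: "degree A < r - r1" by (rule deg_quot[OF A d1 dU lt(2) nz])
      have dB: "degree B < r - r2" by (rule deg_quot[OF B d2 dV lt(3) nz])
      have "degree (U+V) < r" using degree_add_le_max[of U V] dU dV by linarith
      then have dC': "degree C' < r - r0" by (rule deg_quot[OF C' d0 _ lt(1) nz])
      have P: "?s0 * (-C') + ?s1 * A + ?s2 * B = 0" using A B C' by (simp add: algebra_simps)
      have nzC: "-C' \<noteq> 0 \<or> A \<noteq> 0 \<or> B \<noteq> 0" using nzUV A B by auto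
      have dC'': "degree (-C') < r - r0" using dC' by simp
      have "\<exists>C A B. (C \<noteq> 0 \<or> A \<noteq> 0 \<or> B \<noteq> 0) \<and>
          degree C < r - r0 \<and> degree A < r - r1 \<and> degree B < r - r2 \<and>
          ?s0 * C + ?s1 * A + ?s2 * B = 0"
        by (rule exI[of _ "-C'"], rule exI[of _ A], rule exI[of _ B]) (use nzC dC'' dA dB P in blast)
      then have "det (S_mat r r0 r1 r2 x) = 0" using SZ by (simp only:)
      then show False using h by simp
    qed
  qed
qed
end
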